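(* Let $T$ be a compact Hausdorff space, $C(T)$ the ring of real-valued continuous functions on $T$, $\mathcal{I} = [0,1]$, and $n \geq 1$. Let $H : T \times \mathcal{I} \to S^{n-1}$ be continuous, and let $v_0, v_1 \in C(T)^n$ be the unimodular rows whose coordinate functions are the components of $H(\cdot, 0)$ and $H(\cdot, 1)$ respectively. Then there exists $\alpha \in SL_n(C(T))$ which can be connected to the identity matrix and satisfies $\alpha v_0^t = v_1^t$.
   Context: A continuous map $f = (f_1, \ldots, f_n) : T \to S^{n-1}$ gives a unimodular row $(f_1, \ldots, f_n)$ over $C(T)$ (since $\sum f_i^2 = 1$). A matrix $\alpha \in SL_n(C(T))$ "can be connected to the identity" means there is $\beta(X) \in SL_n(C(T)[X])$ with $\beta(0) = I_n$ and $\beta(1) = \alpha$. *)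

theory Defs
  imports "HOL-Analysis.Analysis" "HOL-Library.Function_Algebras"
    "HOL-Computational_Algebra.Polynomial"
begin

text \<open>C(T) is modelled as the functions 't \<Rightarrow> real (pointwise ring
  structure from Function_Algebras) that are continuous on UNIV.\<close>

definition CT_matrix :: "('t::topological_space \<Rightarrow> real)^'n^'n \<Rightarrow> bool" where
  "CT_matrix A \<longleftrightarrow> (\<forall>i j. continuous_on UNIV (A $ i $ j))"

definition SL_CT :: "('t::topological_space \<Rightarrow> real)^'n^'n \<Rightarrow> bool" where
  "SL_CT A \<longleftrightarrow> CT_matrix A \<and> det A = 1"

definition SL_CT_poly :: "(('t::topological_space \<Rightarrow> real) poly)^'n^'n \<Rightarrow> bool" where
  "SL_CT_poly B \<longleftrightarrow> (\<forall>i j k. continuous_on UNIV (coeff (B $ i $ j) k)) \<and> det B = 1"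

definition eval_mat :: "('a::comm_semiring_0 poly)^'n^'n \<Rightarrow> 'a \<Rightarrow> 'a^'n^'n" where
  "eval_mat B x = (\<chi> i j. poly (B $ i $ j) x)"

definition connected_to_identity :: "('t::topological_space \<Rightarrow> real)^'n^'n \<Rightarrow> bool" where
  "connected_to_identity A \<longleftrightarrow>
     (\<exists>B. SL_CT_poly B \<and> eval_mat B 0 = mat 1 \<and> eval_mat B 1 = A)"

end

theory Submission
  imports Defs
begin

definition ev :: "'n::finite \<Rightarrow> 'a::comm_ring_1^'n" where
  "ev i = (\<chi> k. if k = i then 1 else 0)"

lemma detA:
  fixes y :: "'a::comm_ring_1^'n::finite"
  shows "det (\<chi> i. if i = j then y else ev i) = y$j"
proof -
  have y: "y = (\<Sum>k\<in>UNIV. y$k *s ev k)"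
    by (simp add: vec_eq_iff ev_def sum_component if_distrib cong: if_cong)
  have "det (\<chi> i. if i = j then y else ev i) =
     det (\<chi> i. if i = j then (\<Sum>k\<in>UNIV. y$k *s ev k) else ev i)"
    by (simp only: y[symmetric])
  also have "\<dots> = (\<Sum>k\<in>UNIV. det (\<chi> i. if i = j then y$k *s ev k else ev i))"
    by (rule det_linear_row_sum) simp
  also have "\<dots> = (\<Sum>k\<in>UNIV. y$k * det (\<chi> i. if i = j then ev k else (ev i :: 'a^'n)))"
    by (simp add: det_row_mul)
  also have "\<dots> = (\<Sum>k\<in>{j}. y$k * det (\<chi> i. if i = j then ev k else (ev i :: 'a^'n)))"
  proof (rule sum.mono_neutral_right)
    show "\<forall>k\<in>UNIV - {j}. y $ k * det (\<chi> i. if i = j then ev k else (ev i :: 'a^'n)) = 0"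
    proof
      fix k assume "k \<in> UNIV - {j}"
      then have "k \<noteq> j" by auto
      have "det (\<chi> i. if i = j then ev k else (ev i :: 'a^'n)) = 0"
        by (rule det_identical_rows[of j k]) (use \<open>k \<noteq> j\<close> in \<open>auto simp: row_def\<close>)
      then show "y $ k * det (\<chi> i. if i = j then ev k else (ev i :: 'a^'n)) = 0" by simp
    qed
  qed auto
  also have "\<dots> = y$j"
  proof -
    have "(\<chi> i. if i = j then ev j else (ev i :: 'a^'n)) = mat 1"
      by (simp add: vec_eq_iff ev_def mat_def)
    then show ?thesis by simp
  qed
  finally show ?thesis .
qed

lemma detB:
  fixes x y :: "'a::comm_ring_1^'n::finite"
  assumes "finite S" "j \<notin> S"
  shows "det (\<chi> i. if i = j then y else if i \<in> S then ev i + x$i *s y else ev i) = y$j"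
  using assms
proof (induction S rule: finite_induct)
  case empty
  have "(\<chi> i. if i = j then y else if i \<in> {} then ev i + x$i *s y else ev i) = (\<chi> i. if i = j then y else ev i)"
    by (simp add: vec_eq_iff)
  then show ?case using detA[of j y] by simp
next
  case (insert s S)
  let ?c = "\<lambda>i. if i = j then y else if i \<in> S then ev i + x$i *s y else ev i"
  have sj: "s \<noteq> j" using insert by auto
  have e1: "(\<chi> i. if i = j then y else if i \<in> insert s S then ev i + x$i *s y else ev i)
     = (\<chi> i. if i = s then ev i + x$s *s y else ?c i)"
    using sj by (auto simp add: vec_eq_iff)
  have e2: "det (\<chi> i. if i = s then ev i + x$s *s y else ?c i) = det (\<chi> i. if i = s then ev i else ?c i) + det (\<chi> i. if i = s then x$s *s y else ?c i)"
    by (rule det_row_add)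
  have e3: "det (\<chi> i. if i = s then x$s *s y else ?c i) = x$s * det (\<chi> i. if i = s then y else ?c i)"
    by (rule det_row_mul)
  have e4: "det (\<chi> i. if i = s then y else ?c i) = 0"
    by (rule det_identical_rows[of s j]) (use sj in \<open>auto simp: row_def vec_eq_iff\<close>)
  have e5: "(\<chi> i. if i = s then ev i else ?c i) = (\<chi> i. if i = j then y else if i \<in> S then ev i + x$i *s y else ev i)"
    using sj insert by (auto simp: vec_eq_iff)
  show ?case unfolding e1 e2 e3 e4 e5 using insert by simp
qed

lemma detC:
  fixes x y :: "'a::comm_ring_1^'n::finite"
  assumes "finite S"
  shows "det (\<chi> i. if i \<in> S then ev i + x$i *s y else ev i) = 1 + (\<Sum>i\<in>S. x$i * y$i)"
  using assms
proof (induction S rule: finite_induct)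
  case empty
  have "((\<chi> i. if i \<in> {} then ev i + x$i *s y else ev i) :: 'a^'n^'n) = mat 1"
    by (simp add: vec_eq_iff ev_def mat_def)
  then show ?case by simp
next
  case (insert s S)
  let ?c = "\<lambda>i. if i \<in> S then ev i + x$i *s y else ev i"
  have e1: "(\<chi> i. if i \<in> insert s S then ev i + x$i *s y else ev i)
     = (\<chi> i. if i = s then ev i + x$s *s y else ?c i)"
    by (auto simp add: vec_eq_iff)
  have e2: "det (\<chi> i. if i = s then ev i + x$s *s y else ?c i) = det (\<chi> i. if i = s then ev i else ?c i) + det (\<chi> i. if i = s then x$s *s y else ?c i)"
    by (rule det_row_add)
  have e3: "det (\<chi> i. if i = s then x$s *s y else ?c i) = x$s * det (\<chi> i. if i = s then y else ?c i)"
    by (rule det_row_mul)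
  have e4: "det (\<chi> i. if i = s then y else ?c i) = y$s"
    using detB[of S s y x] insert by simp
  have e5: "(\<chi> i. if i = s then ev i else ?c i) = (\<chi> i. if i \<in> S then ev i + x$i *s y else ev i)"
    using insert by (auto simp: vec_eq_iff)
  show ?case unfolding e1 e2 e3 e4 e5 using insert by (simp add: algebra_simps)
qed

lemma det_transvection:
  fixes x y :: "'a::comm_ring_1^'n::finite"
  assumes "(\<Sum>i\<in>UNIV. x$i * y$i) = 0"
  shows "det (mat 1 + (\<chi> i j. x$i * y$j)) = 1"
proof -
  have "mat 1 + (\<chi> i j. x$i * y$j) = (\<chi> i. if i \<in> UNIV then ev i + x$i *s y else ev i)"
    by (simp add: vec_eq_iff ev_def mat_def)
  then show ?thesis using detC[of UNIV x y] assms by simp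
qed

lemma transvection_mult:
  fixes x y z :: "'a::comm_ring_1^'n::finite"
  shows "(mat 1 + (\<chi> i j. x$i * y$j)) *v z = z + (\<Sum>j\<in>UNIV. y$j * z$j) *s x"
proof -
  have "(\<chi> i j. x$i * y$j) *v z = (\<Sum>j\<in>UNIV. y$j * z$j) *s x"
    by (simp add: vec_eq_iff matrix_vector_mult_def sum_distrib_left sum_distrib_right algebra_simps)
  then show ?thesis by (simp add: matrix_vector_mult_add_rdistrib)
qed

definition cts :: "('t::topological_space \<Rightarrow> real) \<Rightarrow> bool" where
  "cts f \<longleftrightarrow> continuous_on UNIV f"

lemma sum_fun_apply: "(sum f A) t = sum (\<lambda>a. f a t) A"
  by (induction A rule: infinite_finite_induct) auto

lemma cts_add: "cts f \<Longrightarrow> cts g \<Longrightarrow> cts (f + g)"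
  unfolding cts_def plus_fun_def by (intro continuous_intros)
lemma cts_diff: "cts f \<Longrightarrow> cts g \<Longrightarrow> cts (f - g)"
  unfolding cts_def fun_diff_def by (intro continuous_intros)
lemma cts_mult: "cts f \<Longrightarrow> cts g \<Longrightarrow> cts (f * g)"
  unfolding cts_def times_fun_def by (intro continuous_intros)
lemma cts_const: "cts (\<lambda>t. c)"
  unfolding cts_def by (intro continuous_intros)
lemma cts_0: "cts 0"
  using cts_const[of 0] by (simp add: zero_fun_def)
lemma cts_1: "cts 1"
  using cts_const[of 1] by (simp add: one_fun_def)
lemma cts_sum: "(\<And>a. a \<in> A \<Longrightarrow> cts (f a)) \<Longrightarrow> cts (sum f A)"
proof -
  assume "\<And>a. a \<in> A \<Longrightarrow> cts (f a)"
  then have "continuous_on UNIV (\<lambda>t. \<Sum>a\<in>A. f a t)"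
    unfolding cts_def by (intro continuous_on_sum) auto
  moreover have "sum f A = (\<lambda>t. \<Sum>a\<in>A. f a t)" by (rule ext) (simp add: sum_fun_apply)
  ultimately show ?thesis unfolding cts_def by simp
qed

definition cpoly :: "('t::topological_space \<Rightarrow> real) poly \<Rightarrow> bool" where
  "cpoly p \<longleftrightarrow> (\<forall>k. cts (coeff p k))"

lemma cpoly_add: "cpoly p \<Longrightarrow> cpoly q \<Longrightarrow> cpoly (p + q)"
  unfolding cpoly_def by (simp add: cts_add)
lemma cpoly_mult: "cpoly p \<Longrightarrow> cpoly q \<Longrightarrow> cpoly (p * q)"
  unfolding cpoly_def coeff_mult by (auto intro!: cts_sum cts_mult)
lemma cpoly_sum: "(\<And>a. a \<in> A \<Longrightarrow> cpoly (f a)) \<Longrightarrow> cpoly (sum f A)"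
  unfolding cpoly_def coeff_sum by (auto intro!: cts_sum)
lemma cpoly_monom: "cts a \<Longrightarrow> cpoly (monom a n)"
  unfolding cpoly_def by (simp add: cts_0)
lemma cpoly_0: "cpoly 0"
  unfolding cpoly_def by (simp add: cts_0)
lemma cpoly_1: "cpoly 1"
  unfolding cpoly_def by (simp add: cts_0 cts_1 coeff_1)

lemma CT_matrix_cts: "CT_matrix A \<longleftrightarrow> (\<forall>i j. cts (A$i$j))"
  by (simp add: CT_matrix_def cts_def)

lemma cts_mat1: "cts ((mat 1 :: ('t::topological_space \<Rightarrow> real)^'n^'n) $ i $ j)"
  by (cases "i = j") (simp_all add: mat_def cts_0 cts_1)

lemma cpoly_mat1: "cpoly ((mat 1 :: ('t::topological_space \<Rightarrow> real) poly^'n^'n) $ i $ j)"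
  by (cases "i = j") (simp_all add: mat_def cpoly_0 cpoly_1)

lemma CT_matrix_mult: "CT_matrix A \<Longrightarrow> CT_matrix B \<Longrightarrow> CT_matrix (A ** B)"
  unfolding CT_matrix_cts matrix_matrix_mult_def
  by (simp only: vec_lambda_beta) (blast intro: cts_sum cts_mult)

lemma SL_CT_mult: "SL_CT A \<Longrightarrow> SL_CT B \<Longrightarrow> SL_CT (A ** B)"
  unfolding SL_CT_def by (simp add: CT_matrix_mult det_mul)

lemma eval_mat_mult: "eval_mat (A ** B) x = eval_mat A x ** eval_mat B x"
  by (simp add: eval_mat_def matrix_matrix_mult_def poly_sum vec_eq_iff)

lemma SL_CT_poly_mult: "SL_CT_poly A \<Longrightarrow> SL_CT_poly B \<Longrightarrow> SL_CT_poly (A ** B)"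
proof -
  assume a: "SL_CT_poly A" "SL_CT_poly B"
  have "cpoly ((A ** B) $ i $ j)" for i j
    using a unfolding SL_CT_poly_def matrix_matrix_mult_def cpoly_def[symmetric] cts_def[symmetric]
    by (auto intro!: cpoly_sum cpoly_mult)
  then show ?thesis using a unfolding SL_CT_poly_def cpoly_def cts_def by (simp add: det_mul)
qed

lemma cti_mult: "connected_to_identity A \<Longrightarrow> connected_to_identity B \<Longrightarrow> connected_to_identity (A ** B)"
  unfolding connected_to_identity_def
  by (metis SL_CT_poly_mult eval_mat_mult matrix_mul_lid)

lemma SL_CT_one: "SL_CT (mat 1 :: ('t::topological_space \<Rightarrow> real)^'n^'n)"
  unfolding SL_CT_def CT_matrix_cts by (simp add: cts_mat1)

lemma cti_one: "connected_to_identity (mat 1 :: ('t::topological_space \<Rightarrow> real)^'n^'n)"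
  unfolding connected_to_identity_def
proof (intro exI conjI)
  show "SL_CT_poly (mat 1 :: ('t::topological_space \<Rightarrow> real) poly ^'n^'n)"
    unfolding SL_CT_poly_def
  proof (intro conjI allI)
    fix i j k
    show "continuous_on UNIV (coeff ((mat 1 :: ('t \<Rightarrow> real) poly ^'n^'n) $ i $ j) k)"
      using cpoly_mat1[of i j] unfolding cpoly_def cts_def by blast
  qed simp
  show "eval_mat (mat 1) 0 = (mat 1 :: ('t::topological_space \<Rightarrow> real)^'n^'n)"
    by (simp add: eval_mat_def mat_def vec_eq_iff)
  show "eval_mat (mat 1) 1 = (mat 1 :: ('t::topological_space \<Rightarrow> real)^'n^'n)"
    by (simp add: eval_mat_def mat_def vec_eq_iff)
qed

lemma transvection_good:
  fixes x y :: "('t::topological_space \<Rightarrow> real)^'n"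
  assumes cx: "\<And>i. cts (x$i)" and cy: "\<And>i. cts (y$i)"
    and orth: "(\<Sum>i\<in>UNIV. x$i * y$i) = 0"
  shows "SL_CT (mat 1 + (\<chi> i j. x$i * y$j)) \<and> connected_to_identity (mat 1 + (\<chi> i j. x$i * y$j))"
proof
  show "SL_CT (mat 1 + (\<chi> i j. x$i * y$j))"
    unfolding SL_CT_def CT_matrix_cts
  proof
    show "\<forall>i j. cts ((mat 1 + (\<chi> i j. x$i * y$j)) $ i $ j)"
    proof (intro allI)
      fix i j
      have "(mat 1 + (\<chi> i j. x$i * y$j)) $ i $ j = (mat 1 :: ('t \<Rightarrow> real)^'n^'n) $ i $ j + x$i * y$j" by simp
      then show "cts ((mat 1 + (\<chi> i j. x$i * y$j)) $ i $ j)"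
        by (simp only:) (intro cts_add cts_mult cts_mat1 cx cy)
    qed
    show "det (mat 1 + (\<chi> i j. x$i * y$j)) = 1" by (rule det_transvection[OF orth])
  qed
  let ?B = "mat 1 + (\<chi> i j. monom (x$i * y$j) 1) :: ('t \<Rightarrow> real) poly ^'n^'n"
  have "SL_CT_poly ?B"
    unfolding SL_CT_poly_def
  proof
    have "cpoly (?B $ i $ j)" for i j
    proof -
      have "?B $ i $ j = (mat 1 :: ('t \<Rightarrow> real) poly^'n^'n) $ i $ j + monom (x$i * y$j) 1" by simp
      then show ?thesis by (simp only:) (intro cpoly_add cpoly_mat1 cpoly_monom cts_mult cx cy)
    qed
    then show "\<forall>i j k. continuous_on UNIV (coeff (?B $ i $ j) k)"
      unfolding cpoly_def cts_def by blast
    let ?x = "(\<chi> i. monom (x$i) 1) :: ('t \<Rightarrow> real) poly^'n"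
    let ?y = "(\<chi> i. monom (y$i) 0) :: ('t \<Rightarrow> real) poly^'n"
    have e: "?B = mat 1 + (\<chi> i j. ?x$i * ?y$j)"
      by (simp add: mult_monom)
    have "(\<Sum>i\<in>UNIV. ?x$i * ?y$i) = monom (\<Sum>i\<in>UNIV. x$i * y$i) 1"
      by (simp add: mult_monom monom_sum)
    then have "(\<Sum>i\<in>UNIV. ?x$i * ?y$i) = 0" using orth by simp
    then show "det ?B = 1" unfolding e by (rule det_transvection)
  qed
  moreover have "eval_mat ?B 0 = mat 1"
    by (simp add: eval_mat_def mat_def vec_eq_iff poly_monom)
  moreover have "eval_mat ?B 1 = mat 1 + (\<chi> i j. x$i * y$j)"
    by (simp add: eval_mat_def mat_def vec_eq_iff poly_monom)
  ultimately show "connected_to_identity (mat 1 + (\<chi> i j. x$i * y$j))"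
    unfolding connected_to_identity_def by blast
qed

definition vf :: "('t \<Rightarrow> real^'n) \<Rightarrow> ('t \<Rightarrow> real)^'n" where
  "vf U = (\<chi> i. (\<lambda>t. U t $ i))"

lemma vf_inner: "(\<Sum>i\<in>UNIV. vf F $ i * vf G $ i) = (\<lambda>t. inner (F t) (G t))"
  by (rule ext) (simp add: sum_fun_apply vf_def inner_vec_def)

lemma vf_diff: "vf (\<lambda>t. F t - G t) = vf F - vf G"
  by (simp add: vf_def vec_eq_iff fun_diff_def)

lemma cts_vf: "continuous_on UNIV F \<Longrightarrow> cts (vf F $ i)"
  unfolding cts_def vf_def by (simp add: continuous_on_component)

lemma step:
  fixes U W :: "'t::topological_space \<Rightarrow> real^'n"
  assumes cU: "continuous_on UNIV U" and cW: "continuous_on UNIV W"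
    and nU: "\<And>t. norm (U t) = 1" and nW: "\<And>t. norm (W t) = 1"
    and d: "\<And>t. dist (U t) (W t) < 1"
  shows "\<exists>\<alpha>. SL_CT \<alpha> \<and> connected_to_identity \<alpha> \<and> \<alpha> *v vf U = vf W"
proof -
  have iU: "inner (U t) (U t) = 1" for t using nU[of t] by (simp add: norm_eq_1)
  have iW: "inner (W t) (W t) = 1" for t using nW[of t] by (simp add: norm_eq_1)
  have cpos: "1 + inner (U t) (W t) > 0" for t
  proof -
    have n: "norm (U t - W t) < 1" using d[of t] by (simp add: dist_norm)
    have "norm (U t - W t) * norm (U t - W t) \<le> norm (U t - W t)"
      by (rule mult_left_le) (use n in auto)
    then have "(norm (U t - W t))\<^sup>2 < 1" using n by (simp add: power2_eq_square)
    moreover have "(norm (U t - W t))\<^sup>2 = 2 - 2 * inner (U t) (W t)"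
      by (simp add: power2_norm_eq_inner inner_diff_left inner_diff_right iU iW inner_commute)
    ultimately show ?thesis by simp
  qed
  define P where "P t = (1 / (1 + inner (U t) (W t))) *\<^sub>R (U t + W t)" for t
  have cP: "continuous_on UNIV P"
    unfolding P_def using cpos
    by (intro continuous_intros cU cW) (use cpos in \<open>auto simp: less_le\<close>)
  have iPU: "inner (P t) (U t) = 1" for t
  proof -
    have "inner (P t) (U t) = (1 + inner (U t) (W t)) / (1 + inner (U t) (W t))"
      by (simp add: P_def inner_add_left inner_add_right iU inner_commute add_divide_distrib)
    then show ?thesis using cpos[of t] by simp
  qed
  have iWP: "inner (W t) (P t) = 1" for t
  proof -
    have "inner (W t) (P t) = (inner (W t) (U t) + 1) / (1 + inner (U t) (W t))"
      by (simp add: P_def inner_add_right iW)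
    then show ?thesis using cpos[of t] by (simp add: inner_commute add.commute)
  qed
  have iPW: "inner (P t) (W t) = 1" for t using iWP[of t] by (simp add: inner_commute)
  let ?x1 = "vf (\<lambda>t. P t - U t)" and ?y1 = "vf U"
  let ?x2 = "vf (\<lambda>t. W t - P t)" and ?y2 = "vf W"
  have o1: "(\<Sum>i\<in>UNIV. ?x1$i * ?y1$i) = 0"
    unfolding vf_inner by (simp add: inner_diff_left iPU iU zero_fun_def)
  have o2: "(\<Sum>i\<in>UNIV. ?x2$i * ?y2$i) = 0"
    unfolding vf_inner by (simp add: inner_diff_left iPW iW zero_fun_def)
  have cd1: "continuous_on UNIV (\<lambda>t. P t - U t)" using cP cU by (intro continuous_intros)
  have cd2: "continuous_on UNIV (\<lambda>t. W t - P t)" using cP cW by (intro continuous_intros)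
  note T1 = transvection_good[OF cts_vf[OF cd1] cts_vf[OF cU] o1]
  note T2 = transvection_good[OF cts_vf[OF cd2] cts_vf[OF cW] o2]
  let ?t1 = "mat 1 + (\<chi> i j. ?x1$i * ?y1$j)"
  let ?t2 = "mat 1 + (\<chi> i j. ?x2$i * ?y2$j)"
  have m1: "?t1 *v vf U = vf P"
  proof -
    have "(\<Sum>j\<in>UNIV. vf U $ j * vf U $ j) = 1"
      unfolding vf_inner by (simp add: iU one_fun_def)
    then have "?t1 *v vf U = vf U + 1 *s ?x1" by (simp only: transvection_mult)
    then show ?thesis by (simp add: vf_diff)
  qed
  have m2: "?t2 *v vf P = vf W"
  proof -
    have "(\<Sum>j\<in>UNIV. vf W $ j * vf P $ j) = 1"
      unfolding vf_inner by (simp add: iWP one_fun_def)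
    then have "?t2 *v vf P = vf P + 1 *s ?x2" by (simp only: transvection_mult)
    then show ?thesis by (simp add: vf_diff)
  qed
  show ?thesis
  proof (intro exI conjI)
    show "SL_CT (?t2 ** ?t1)" using T1 T2 by (simp add: SL_CT_mult)
    show "connected_to_identity (?t2 ** ?t1)" using T1 T2 by (simp add: cti_mult)
    show "(?t2 ** ?t1) *v vf U = vf W"
      by (simp add: matrix_vector_mul_assoc[symmetric] m1 m2)
  qed
qed

theorem theorem3p5:
  fixes H :: "'t::t2_space \<times> real \<Rightarrow> real^'n"
  assumes "compact (UNIV :: 't set)"
    and "continuous_on (UNIV \<times> {0..1}) H"
    and "H ` (UNIV \<times> {0..1}) \<subseteq> sphere 0 1"
  shows "\<exists>\<alpha> :: ('t \<Rightarrow> real)^'n^'n. SL_CT \<alpha> \<and> connected_to_identity \<alpha> \<and>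
           \<alpha> *v (\<chi> i. (\<lambda>t. (H (t, 0)) $ i)) = (\<chi> i. (\<lambda>t. (H (t, 1)) $ i))"
proof -
  note cH = assms(2)
  define H' where "H' p = H (fst p, max 0 (min 1 (snd p)))" for p
  have cH': "continuous_on UNIV H'"
    unfolding H'_def
  proof (rule continuous_on_compose2[OF cH])
    show "continuous_on UNIV (\<lambda>p::'t \<times> real. (fst p, max 0 (min 1 (snd p))))"
      by (intro continuous_on_Pair continuous_on_fst continuous_on_max continuous_on_min continuous_on_const continuous_on_snd continuous_on_id)
  qed auto
  have H'H: "H' (t, s) = H (t, s)" if "s \<in> {0..1}" for t s
    using that by (simp add: H'_def)
  have tube: "\<exists>X. open X \<and> s0 \<in> X \<and> (\<forall>a\<in>X. \<forall>t. dist (H' (t, a)) (H' (t, s0)) < 1/2)" for s0 :: real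
  proof -
    let ?W = "{p :: real \<times> 't. dist (H' (snd p, fst p)) (H' (snd p, s0)) < 1/2}"
    have c1: "continuous_on UNIV (\<lambda>p :: real \<times> 't. H' (snd p, fst p))"
      by (rule continuous_on_compose2[OF cH']) (simp_all add: continuous_on_Pair continuous_on_fst continuous_on_snd continuous_on_id)
    have c2: "continuous_on UNIV (\<lambda>p :: real \<times> 't. H' (snd p, s0))"
      by (rule continuous_on_compose2[OF cH']) (simp_all add: continuous_on_Pair continuous_on_const continuous_on_snd continuous_on_id)
    have "continuous_on UNIV (\<lambda>p :: real \<times> 't. dist (H' (snd p, fst p)) (H' (snd p, s0)))"
      by (rule continuous_on_dist[OF c1 c2])
    then have "open ?W"
      by (rule open_Collect_less) (rule continuous_on_const)
    moreover have "{s0} \<times> UNIV \<subseteq> ?W" by auto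
    ultimately obtain X where "s0 \<in> X" "open X" "X \<times> UNIV \<subseteq> ?W"
      using Elementary_Topology.tube_lemma[OF assms(1), of ?W s0] by blast
    then have "\<forall>a\<in>X. \<forall>t. dist (H' (t, a)) (H' (t, s0)) < 1/2"
    proof (intro ballI allI)
      fix a t assume "X \<times> UNIV \<subseteq> ?W" "a \<in> X"
      then have "(a, t) \<in> ?W" by blast
      then show "dist (H' (t, a)) (H' (t, s0)) < 1/2" by simp
    qed
    then show ?thesis using \<open>s0 \<in> X\<close> \<open>open X\<close> by blast
  qed
  then have "\<forall>s0. \<exists>X. open X \<and> s0 \<in> X \<and> (\<forall>a\<in>X. \<forall>t. dist (H' (t, a)) (H' (t, s0)) < 1/2)" by blast
  then obtain X where X0: "\<forall>s0. open (X s0) \<and> s0 \<in> X s0 \<and> (\<forall>a\<in>X s0. \<forall>t. dist (H' (t, a)) (H' (t, s0)) < 1/2)"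
    by (rule choice[THEN exE]) blast
  then have X: "\<And>s. open (X s)" "\<And>s. s \<in> X s"
     "\<And>s a t. a \<in> X s \<Longrightarrow> dist (H' (t, a)) (H' (t, s)) < 1/2"
    by auto
  obtain e where e: "e > 0" "\<And>x. x \<in> {0..1::real} \<Longrightarrow> \<exists>G\<in>range X. ball x e \<subseteq> G"
    using Heine_Borel_lemma[of "{0..1::real}" "range X"] X(1,2) by blast
  obtain N :: nat where N: "N > 0" "inverse (real N) < e"
    using ex_inverse_of_nat_less[OF e(1)] by blast
  have close: "dist (H (t, real k / N)) (H (t, real (Suc k) / N)) < 1" if "k < N" for k t
  proof -
    have kN: "real k \<le> real N" "real (Suc k) \<le> real N" using that by simp_all
    have Np: "real N > 0" using N by simp
    have a: "real k / N \<in> {0..1}" and b: "real (Suc k) / N \<in> {0..1}"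
      using kN Np by (simp_all add: divide_le_eq_1)
    obtain G where G: "G \<in> range X" "ball (real k / N) e \<subseteq> G" using e(2)[OF a] by blast
    then obtain s where s: "ball (real k / N) e \<subseteq> X s" by blast
    have "real (Suc k) / N - real k / N = 1 / N"
      by (simp add: diff_divide_distrib[symmetric])
    then have "dist (real k / N) (real (Suc k) / N) = inverse (real N)"
      using Np by (simp add: dist_real_def divide_inverse)
    then have "real (Suc k) / N \<in> ball (real k / N) e" using N(2) by simp
    then have i1: "real (Suc k) / N \<in> X s" using s by blast
    have i2: "real k / N \<in> X s" using s e(1) centre_in_ball by blast
    have "dist (H' (t, real k / N)) (H' (t, real (Suc k) / N)) < 1"
      by (rule dist_triangle_half_l[where y="H' (t, s)"]) (use X(3)[OF i2] X(3)[OF i1] in simp_all)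
    then show ?thesis using H'H[OF a] H'H[OF b] by simp
  qed
  have cs: "continuous_on UNIV (\<lambda>t. H (t, s))" if "s \<in> {0..1}" for s
  proof (rule continuous_on_compose2[OF cH])
    show "continuous_on UNIV (\<lambda>t::'t. (t, s))"
      by (intro continuous_on_Pair continuous_on_const continuous_on_id)
  qed (use that in auto)
  have ns: "norm (H (t, s)) = 1" if "s \<in> {0..1}" for t s
  proof -
    have "H (t, s) \<in> sphere 0 1" using assms(3) that by blast
    then show ?thesis by simp
  qed
  have ind: "\<exists>\<alpha>. SL_CT \<alpha> \<and> connected_to_identity \<alpha> \<and> \<alpha> *v vf (\<lambda>t. H (t, 0)) = vf (\<lambda>t. H (t, real k / N))"
    if "k \<le> N" for k
    using that
  proof (induction k)
    case 0
    then show ?case using SL_CT_one cti_one by (intro exI[of _ "mat 1"]) auto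
  next
    case (Suc k)
    then obtain \<alpha> where \<alpha>: "SL_CT \<alpha>" "connected_to_identity \<alpha>" "\<alpha> *v vf (\<lambda>t. H (t, 0)) = vf (\<lambda>t. H (t, real k / N))"
      by auto
    have a: "real k / N \<in> {0..1}" and b: "real (Suc k) / N \<in> {0..1}"
      using Suc N by auto
    obtain \<beta> where \<beta>: "SL_CT \<beta>" "connected_to_identity \<beta>" "\<beta> *v vf (\<lambda>t. H (t, real k / N)) = vf (\<lambda>t. H (t, real (Suc k) / N))"
      using step[OF cs[OF a] cs[OF b] ns[OF a] ns[OF b] close] Suc by auto
    show ?case
      using \<alpha> \<beta> by (intro exI[of _ "\<beta> ** \<alpha>"]) (simp add: SL_CT_mult cti_mult matrix_vector_mul_assoc[symmetric])
  qed
  from ind[of N] N show ?thesis by (simp add: vf_def)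
qed

end
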